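(* Let $G$ and $H$ be two vertex-disjoint graphs and $u\in V(G)$. Then $\gamma_{gr}(G_{u\hookleftarrow H})=\max \{\gamma_{gr}(G),\ \gamma_{gr}^u(G)+\gamma_{gr}(H)-1\}$.
   Context: All graphs are finite and simple; $N[v]$ is the closed neighborhood. $G_{u\hookleftarrow H}$ is the graph obtained from $G$ by replacing $u$ by $H$: vertex set $(V(G)\setminus\{u\})\cup V(H)$, edges those of $G-u$, those of $H$, and all edges joining a vertex of $V(H)$ to a vertex of $N(u)$. For a sequence $S=(v_1,\dots,v_k)$ of distinct vertices, $\widehat S=\{v_1,\dots,v_k\}$, $|S|=k$, $PN_S(v_i)=N[v_i]\setminus\bigcup_{j<i}N[v_j]$. $S$ is a legal dominating sequence if $\widehat S$ is dominating and each $PN_S(v_i)\ne\emptyset$; $\gamma_{gr}(G)$ is the maximum length of such a sequence. For such $S$, the footprinter $f_S(x)$ of $x$ is the unique $v\in\widehat S$ with $x\in PN_S(v)$, and $I_S=\{v:f_S(v)=v\}$. For an independent set $I$, $\gamma_{gr}(G,I)$ is the maximum length of a legal dominating sequence $S$ of $G$ with $I_S=I$ ($-\infty$ if there is none), and $\gamma^u_{gr}(G)=\max\{\gamma_{gr}(G,I): I \text{ independent set of } G,\ u\in I\}$. *)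

theory Defs
  imports Main "HOL-Library.Extended_Real"
begin

type_synonym 'a graph = "'a set \<times> ('a \<times> 'a) set"

definition verts :: "'a graph \<Rightarrow> 'a set" where "verts G = fst G"
definition edges :: "'a graph \<Rightarrow> ('a \<times> 'a) set" where "edges G = snd G"

definition graph :: "'a graph \<Rightarrow> bool" where
  "graph G \<longleftrightarrow> finite (verts G) \<and> verts G \<noteq> {} \<and> edges G \<subseteq> verts G \<times> verts G
     \<and> sym (edges G) \<and> (\<forall>x. (x, x) \<notin> edges G)"

definition cnbhd :: "'a graph \<Rightarrow> 'a \<Rightarrow> 'a set" where
  "cnbhd G v = insert v {w. (v, w) \<in> edges G}"

definition PN :: "'a graph \<Rightarrow> 'a list \<Rightarrow> nat \<Rightarrow> 'a set" where
  "PN G S i = cnbhd G (S ! i) - (\<Union>j<i. cnbhd G (S ! j))"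

definition legal_dom_seq :: "'a graph \<Rightarrow> 'a list \<Rightarrow> bool" where
  "legal_dom_seq G S \<longleftrightarrow> distinct S \<and> set S \<subseteq> verts G
     \<and> verts G \<subseteq> (\<Union>v\<in>set S. cnbhd G v)
     \<and> (\<forall>i<length S. PN G S i \<noteq> {})"

definition gamma_gr :: "'a graph \<Rightarrow> ereal" where
  "gamma_gr G = Sup {ereal (real (length S)) | S. legal_dom_seq G S}"

definition footprinter :: "'a graph \<Rightarrow> 'a list \<Rightarrow> 'a \<Rightarrow> 'a" where
  "footprinter G S x = (THE v. \<exists>i<length S. S ! i = v \<and> x \<in> PN G S i)"

definition I_S :: "'a graph \<Rightarrow> 'a list \<Rightarrow> 'a set" where
  "I_S G S = {v \<in> verts G. footprinter G S v = v}"

definition independent :: "'a graph \<Rightarrow> 'a set \<Rightarrow> bool" where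
  "independent G I \<longleftrightarrow> I \<subseteq> verts G \<and> (\<forall>x\<in>I. \<forall>y\<in>I. (x, y) \<notin> edges G)"

text \<open>gamma_gr(G, I); equals -infinity (Sup of the empty set) if there is no such sequence.\<close>
definition gamma_gr_I :: "'a graph \<Rightarrow> 'a set \<Rightarrow> ereal" where
  "gamma_gr_I G I = Sup {ereal (real (length S)) | S. legal_dom_seq G S \<and> I_S G S = I}"

definition gamma_gr_u :: "'a graph \<Rightarrow> 'a \<Rightarrow> ereal" where
  "gamma_gr_u G u = Sup {gamma_gr_I G I | I. independent G I \<and> u \<in> I}"

definition replace :: "'a graph \<Rightarrow> 'a \<Rightarrow> 'a graph \<Rightarrow> 'a graph" where
  "replace G u H =
     ((verts G - {u}) \<union> verts H,
      {(x, y). (x, y) \<in> edges G \<and> x \<noteq> u \<and> y \<noteq> u}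
      \<union> edges H
      \<union> {(x, y). x \<in> verts H \<and> (u, y) \<in> edges G}
      \<union> {(y, x). x \<in> verts H \<and> (u, y) \<in> edges G})"

end

theory Submission imports Defs begin

definition dm :: "'a graph \<Rightarrow> 'a list \<Rightarrow> 'a set" where
  "dm G xs = (\<Union>v\<in>set xs. cnbhd G v)"

lemma dm_simps[simp]: "dm G [] = {}" "dm G (v#xs) = cnbhd G v \<union> dm G xs"
  "dm G (xs@ys) = dm G xs \<union> dm G ys"
  by (auto simp: dm_def)

fun lf :: "'a graph \<Rightarrow> 'a set \<Rightarrow> 'a list \<Rightarrow> bool" where
  "lf G D [] = True"
| "lf G D (v#B) = (\<not> cnbhd G v \<subseteq> D \<and> lf G (D \<union> cnbhd G v) B)"

lemma lf_append: "lf G D (A@B) = (lf G D A \<and> lf G (D \<union> dm G A) B)"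
  by (induction A arbitrary: D) (auto simp: Un_assoc)

lemma lf_fail: "lf G D B \<Longrightarrow> v \<in> set B \<Longrightarrow> cnbhd G v \<subseteq> D \<Longrightarrow> False"
proof (induction B arbitrary: D)
  case (Cons a B)
  then show ?case by (metis le_supI1 lf.simps(2) set_ConsD)
qed simp

lemma lf_distinct: "lf G D B \<Longrightarrow> distinct B"
proof (induction B arbitrary: D)
  case (Cons a B)
  then show ?case using lf_fail[of G "D \<union> cnbhd G a" B a] by auto
qed simp

lemma cnbhd_self: "v \<in> cnbhd G v" by (simp add: cnbhd_def)

lemma cnbhd_sub: "graph G \<Longrightarrow> v \<in> verts G \<Longrightarrow> cnbhd G v \<subseteq> verts G"
  by (auto simp: graph_def cnbhd_def)

lemma PN_eq: "i \<le> length S \<Longrightarrow> PN G S i = cnbhd G (S!i) - dm G (take i S)"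
proof -
  assume "i \<le> length S"
  then have "set (take i S) = (\<lambda>j. S!j) ` {..<i}" using nth_image[of i S] by (simp add: atLeast0LessThan)
  then show ?thesis unfolding PN_def dm_def by simp
qed

lemma lf_iff_gen: "(\<forall>i<length S. \<not> cnbhd G (S!i) \<subseteq> D \<union> dm G (take i S)) \<longleftrightarrow> lf G D S"
proof (induction S arbitrary: D)
  case (Cons v S)
  have "(\<forall>i<length (v#S). \<not> cnbhd G ((v#S)!i) \<subseteq> D \<union> dm G (take i (v#S))) \<longleftrightarrow>
     (\<not> cnbhd G v \<subseteq> D \<and> (\<forall>i<length S. \<not> cnbhd G (S!i) \<subseteq> (D \<union> cnbhd G v) \<union> dm G (take i S)))"
    by (simp add: All_less_Suc2 Un_assoc)
  then show ?case using Cons.IH[of "D \<union> cnbhd G v"] by simp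
qed simp

lemma legal_iff: "legal_dom_seq G S \<longleftrightarrow> lf G {} S \<and> set S \<subseteq> verts G \<and> verts G \<subseteq> dm G S"
proof -
  have "(\<forall>i<length S. PN G S i \<noteq> {}) \<longleftrightarrow> (\<forall>i<length S. \<not> cnbhd G (S!i) \<subseteq> {} \<union> dm G (take i S))"
    by (auto simp: PN_eq)
  then have "(\<forall>i<length S. PN G S i \<noteq> {}) \<longleftrightarrow> lf G {} S" using lf_iff_gen[of S G "{}"] by simp
  then show ?thesis unfolding legal_dom_seq_def dm_def using lf_distinct by blast
qed

lemma extend:
  assumes "graph G" "lf G {} S" "set S \<subseteq> verts G"
  shows "\<exists>S'. legal_dom_seq G (S @ S')"
  using assms(2,3)
proof (induction "card (verts G - dm G S)" arbitrary: S rule: less_induct)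
  case less
  show ?case
  proof (cases "verts G \<subseteq> dm G S")
    case True
    then have "legal_dom_seq G (S @ [])" using less.prems by (simp add: legal_iff)
    then show ?thesis by blast
  next
    case False
    then obtain x where x: "x \<in> verts G" "x \<notin> dm G S" by blast
    have l: "lf G {} (S @ [x])" using less.prems x cnbhd_self[of x G] by (auto simp: lf_append)
    have fin: "finite (verts G)" using assms(1) by (simp add: graph_def)
    have "verts G - dm G (S@[x]) \<subset> verts G - dm G S" using x cnbhd_self[of x G] by auto
    hence "card (verts G - dm G (S@[x])) < card (verts G - dm G S)"
      using fin by (meson finite_Diff psubset_card_mono)
    from less.hyps[OF this l] x less.prems obtain S' where "legal_dom_seq G ((S@[x])@S')" by auto
    then show ?thesis by (intro exI[of _ "x#S'"]) simp
  qed
qed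

lemma PN_disj: "i < j \<Longrightarrow> x \<in> PN G S i \<Longrightarrow> x \<notin> PN G S j"
  unfolding PN_def by auto

lemma FP: assumes "i < length S" "x \<in> PN G S i" shows "footprinter G S x = S!i"
  unfolding footprinter_def
proof (rule the_equality)
  show "\<exists>i'<length S. S ! i' = S ! i \<and> x \<in> PN G S i'" using assms by blast
next
  fix v assume "\<exists>j<length S. S ! j = v \<and> x \<in> PN G S j"
  then obtain j where j: "j < length S" "S!j = v" "x \<in> PN G S j" by blast
  have "j = i" using PN_disj[of i j x G S] PN_disj[of j i x G S] assms j
    by (metis linorder_neqE_nat)
  then show "v = S!i" using j by simp
qed

lemma FP_ex: assumes "x \<in> dm G S" shows "\<exists>i<length S. x \<in> PN G S i"
proof -
  from assms obtain v where "v \<in> set S" "x \<in> cnbhd G v" by (auto simp: dm_def)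
  then have "\<exists>i. i < length S \<and> x \<in> cnbhd G (S!i)" by (metis in_set_conv_nth)
  then obtain i where i: "i < length S \<and> x \<in> cnbhd G (S!i)"
    and m: "\<forall>m<i. \<not> (m < length S \<and> x \<in> cnbhd G (S!m))"
    using exists_least_iff[of "\<lambda>i. i < length S \<and> x \<in> cnbhd G (S!i)"] by blast
  have "x \<in> PN G S i" unfolding PN_def using i m by auto
  then show ?thesis using i by blast
qed

lemma IS_intro: assumes "S = A @ u # B" "u \<notin> dm G A" "u \<in> verts G"
  shows "u \<in> I_S G S"
proof -
  have "length A < length S" "S ! length A = u" using assms by auto
  moreover have "u \<in> PN G S (length A)" using assms by (simp add: PN_eq cnbhd_self)
  ultimately have "footprinter G S u = u" using FP[of "length A" S u G] by simp
  then show ?thesis using assms unfolding I_S_def by simp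
qed

lemma IS_elim: assumes "legal_dom_seq G S" "u \<in> I_S G S"
  shows "\<exists>A B. S = A @ u # B \<and> u \<notin> dm G A"
proof -
  have u: "u \<in> verts G" "footprinter G S u = u" using assms(2) by (auto simp: I_S_def)
  then have ud: "u \<in> dm G S" using assms(1) by (auto simp: legal_iff)
  obtain i where i: "i < length S" "u \<in> PN G S i" using FP_ex[OF ud] by blast
  then have "S!i = u" using FP[OF i] u(2) by simp
  then have "S = take i S @ u # drop (Suc i) S" using i by (metis id_take_nth_drop)
  moreover have "u \<notin> dm G (take i S)" using i by (simp add: PN_eq)
  ultimately show ?thesis by blast
qed

lemma IS_indep: assumes "graph G" "legal_dom_seq G S" shows "independent G (I_S G S)"
  unfolding independent_def
proof (intro conjI ballI)
  show "I_S G S \<subseteq> verts G" by (auto simp: I_S_def)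
next
  have key: "\<exists>i<length S. S!i = x \<and> x \<in> PN G S i" if "x \<in> I_S G S" for x
  proof -
    have u: "x \<in> verts G" "footprinter G S x = x" using that by (auto simp: I_S_def)
    then have xd: "x \<in> dm G S" using assms(2) by (auto simp: legal_iff)
    obtain i where i: "i < length S" "x \<in> PN G S i" using FP_ex[OF xd] by blast
    have "S!i = x" using FP[OF i] u(2) by simp
    then show ?thesis using i by blast
  qed
  fix x y assume x: "x \<in> I_S G S" and y: "y \<in> I_S G S"
  show "(x, y) \<notin> edges G"
  proof
    assume e: "(x, y) \<in> edges G"
    then have e2: "(y, x) \<in> edges G" using assms(1) by (auto simp: graph_def sym_def)
    obtain i where i: "i<length S" "S!i = x" "x \<in> PN G S i" using key x by blast
    obtain j where j: "j<length S" "S!j = y" "y \<in> PN G S j" using key y by blast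
    have "x \<noteq> y" using e assms(1) by (auto simp: graph_def)
    then have "i \<noteq> j" using i j by auto
    then show False
    proof (cases "i < j")
      case True
      then have "y \<in> cnbhd G (S!i)" using i e by (simp add: cnbhd_def)
      then show False using j True unfolding PN_def by auto
    next
      case False
      then have "j < i" using \<open>i \<noteq> j\<close> by simp
      then have "x \<in> cnbhd G (S!j)" using j e2 by (simp add: cnbhd_def)
      then show False using i \<open>j < i\<close> unfolding PN_def by auto
    qed
  qed
qed


locale rs =
  fixes G H :: "'a graph" and u :: 'a
  assumes gG: "graph G" and gH: "graph H" and disj: "verts G \<inter> verts H = {}" and uG: "u \<in> verts G"
begin

abbreviation "G' \<equiv> replace G u H"

lemma V': "verts G' = (verts G - {u}) \<union> verts H" by (simp add: replace_def verts_def)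

lemma E': "edges G' = {(x, y). (x, y) \<in> edges G \<and> x \<noteq> u \<and> y \<noteq> u}
      \<union> edges H
      \<union> {(x, y). x \<in> verts H \<and> (u, y) \<in> edges G}
      \<union> {(y, x). x \<in> verts H \<and> (u, y) \<in> edges G}"
  by (simp add: replace_def edges_def)

lemma EG: "edges G \<subseteq> verts G \<times> verts G" "sym (edges G)" "\<And>x. (x,x) \<notin> edges G"
  using gG by (auto simp: graph_def)
lemma EH: "edges H \<subseteq> verts H \<times> verts H" "sym (edges H)" "\<And>x. (x,x) \<notin> edges H"
  using gH by (auto simp: graph_def)

lemma nG: assumes "v \<in> verts G" "v \<noteq> u"
  shows "cnbhd G' v = (cnbhd G v - {u}) \<union> (if u \<in> cnbhd G v then verts H else {})"
proof -
  have vH: "v \<notin> verts H" using assms disj by auto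
  have s: "(u,v) \<in> edges G \<longleftrightarrow> (v,u) \<in> edges G" using EG(2) by (auto simp: sym_def)
  show ?thesis using vH s EH(1) assms unfolding cnbhd_def E' by auto
qed

lemma nH: assumes "h \<in> verts H"
  shows "cnbhd G' h = cnbhd H h \<union> (cnbhd G u - {u})"
proof -
  have hG: "h \<notin> verts G" using assms disj by auto
  show ?thesis using hG EG(1) EG(3) assms unfolding cnbhd_def E' by auto
qed

lemma graph': "graph G'"
proof -
  have "finite (verts G')" using gG gH V' by (simp add: graph_def)
  moreover have "verts G' \<noteq> {}" using gH V' by (auto simp: graph_def)
  moreover have "edges G' \<subseteq> verts G' \<times> verts G'" using EG(1) EG(3)[of u] EH(1) disj V' unfolding E' by auto
  moreover have "sym (edges G')" using EG(2) EH(2) unfolding E' sym_def by blast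
  moreover have "\<forall>x. (x, x) \<notin> edges G'" using EG(1) EG(3)[of u] EH(3) disj unfolding E' by (auto simp: EG(3))
  ultimately show ?thesis by (simp add: graph_def)
qed

lemma cG: "v \<in> verts G \<Longrightarrow> cnbhd G v \<subseteq> verts G" by (rule cnbhd_sub[OF gG])
lemma cH: "v \<in> verts H \<Longrightarrow> cnbhd H v \<subseteq> verts H" by (rule cnbhd_sub[OF gH])
lemma cG': "v \<in> verts G' \<Longrightarrow> cnbhd G' v \<subseteq> verts G'" by (rule cnbhd_sub[OF graph'])

lemma nG': assumes "v \<in> verts G" "v \<noteq> u" "x \<in> verts G'"
  shows "x \<in> cnbhd G' v \<longleftrightarrow> (if x \<in> verts H then u else x) \<in> cnbhd G v"
  using nG[OF assms(1,2)] cG[OF assms(1)] assms(3) V' disj by auto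

lemma C: assumes "h \<in> verts H" "x \<in> verts G" "w \<in> verts G"
  shows "(if x = u then h else x) \<in> cnbhd G' (if w = u then h else w) \<longleftrightarrow> x \<in> cnbhd G w"
proof (cases "w = u")
  case True
  then show ?thesis using nH[OF assms(1)] cH[OF assms(1)] cnbhd_self[of h H] cnbhd_self[of u G]
      assms disj by auto
next
  case False
  then show ?thesis using nG[OF assms(3) False] cG[OF assms(3)] assms disj by auto
qed

lemma T_H: "lf H D B \<Longrightarrow> set B \<subseteq> verts H \<Longrightarrow> D' \<inter> verts H \<subseteq> D \<Longrightarrow> lf G' D' B"
proof (induction B arbitrary: D D')
  case (Cons v B)
  have vH: "v \<in> verts H" using Cons by simp
  from Cons.prems(1) obtain x where x: "x \<in> cnbhd H v" "x \<notin> D" by auto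
  have xH: "x \<in> verts H" using cH[OF vH] x by auto
  have "x \<in> cnbhd G' v" using nH[OF vH] x by auto
  moreover have "x \<notin> D'" using x xH Cons.prems(3) by auto
  moreover have "lf G' (D' \<union> cnbhd G' v) B"
  proof (rule Cons.IH[of "D \<union> cnbhd H v"])
    show "lf H (D \<union> cnbhd H v) B" using Cons.prems by simp
    show "set B \<subseteq> verts H" using Cons.prems by simp
    show "(D' \<union> cnbhd G' v) \<inter> verts H \<subseteq> D \<union> cnbhd H v"
      using Cons.prems(3) nH[OF vH] cG[OF uG] disj by auto
  qed
  ultimately show ?case by auto
qed simp

lemma T_Gmap:
  assumes "h \<in> verts H"
  shows "lf G D B \<Longrightarrow> set B \<subseteq> verts G \<Longrightarrow>
    (\<forall>x\<in>verts G. (if x = u then h else x) \<in> D' \<longrightarrow> x \<in> D) \<Longrightarrow>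
    lf G' D' (map (\<lambda>x. if x = u then h else x) B)"
proof (induction B arbitrary: D D')
  case (Cons v B)
  have vG: "v \<in> verts G" using Cons by simp
  from Cons.prems(1) obtain x where x: "x \<in> cnbhd G v" "x \<notin> D" by auto
  have xG: "x \<in> verts G" using cG[OF vG] x by auto
  have "(if x = u then h else x) \<in> cnbhd G' (if v = u then h else v)" using C[OF assms xG vG] x by auto
  moreover have "(if x = u then h else x) \<notin> D'" using x xG Cons.prems(3) by auto
  moreover have "lf G' (D' \<union> cnbhd G' (if v = u then h else v)) (map (\<lambda>x. if x = u then h else x) B)"
  proof (rule Cons.IH[of "D \<union> cnbhd G v"])
    show "lf G (D \<union> cnbhd G v) B" using Cons.prems by simp
    show "set B \<subseteq> verts G" using Cons.prems by simp
    show "\<forall>x\<in>verts G. (if x = u then h else x) \<in> D' \<union> cnbhd G' (if v = u then h else v) \<longrightarrow> x \<in> D \<union> cnbhd G v"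
      using Cons.prems(3) C[OF assms _ vG] by auto
  qed
  ultimately show ?case by auto
qed simp

lemma T_GA: "lf G D B \<Longrightarrow> set B \<subseteq> verts G - {u} \<Longrightarrow> (\<forall>v\<in>set B. u \<in> cnbhd G v \<longrightarrow> u \<in> D)
   \<Longrightarrow> D' \<inter> (verts G - {u}) \<subseteq> D \<Longrightarrow> lf G' D' B"
proof (induction B arbitrary: D D')
  case (Cons v B)
  have vG: "v \<in> verts G" "v \<noteq> u" using Cons by auto
  from Cons.prems(1) obtain x where x: "x \<in> cnbhd G v" "x \<notin> D" by auto
  have xG: "x \<in> verts G" "x \<noteq> u" using cG[OF vG(1)] x Cons.prems(3) by auto
  have "x \<in> cnbhd G' v" using nG[OF vG] x xG by auto
  moreover have "x \<notin> D'" using x xG Cons.prems(4) by auto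
  moreover have "lf G' (D' \<union> cnbhd G' v) B"
  proof (rule Cons.IH[of "D \<union> cnbhd G v"])
    show "lf G (D \<union> cnbhd G v) B" using Cons.prems by simp
    show "set B \<subseteq> verts G - {u}" using Cons.prems by simp
    show "\<forall>w\<in>set B. u \<in> cnbhd G w \<longrightarrow> u \<in> D \<union> cnbhd G v" using Cons.prems(3) by auto
    show "(D' \<union> cnbhd G' v) \<inter> (verts G - {u}) \<subseteq> D \<union> cnbhd G v"
      using Cons.prems(4) nG[OF vG] disj by auto
  qed
  ultimately show ?case by auto
qed simp

lemma T_back: "lf G' D' B \<Longrightarrow> set B \<subseteq> verts G - {u} \<Longrightarrow>
   (\<forall>x\<in>verts G'. (if x \<in> verts H then u else x) \<in> D \<longrightarrow> x \<in> D') \<Longrightarrow> lf G D B"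
proof (induction B arbitrary: D D')
  case (Cons v B)
  have vG: "v \<in> verts G" "v \<noteq> u" using Cons by auto
  from Cons.prems(1) obtain x where x: "x \<in> cnbhd G' v" "x \<notin> D'" by auto
  have xV: "x \<in> verts G'" using cG'[of v] x V' vG by auto
  have "(if x \<in> verts H then u else x) \<in> cnbhd G v" using nG'[OF vG xV] x by auto
  moreover have "(if x \<in> verts H then u else x) \<notin> D" using x xV Cons.prems(3) by auto
  moreover have "lf G (D \<union> cnbhd G v) B"
  proof (rule Cons.IH[of "D' \<union> cnbhd G' v"])
    show "lf G' (D' \<union> cnbhd G' v) B" using Cons.prems by simp
    show "set B \<subseteq> verts G - {u}" using Cons.prems by simp
    show "\<forall>x\<in>verts G'. (if x \<in> verts H then u else x) \<in> D \<union> cnbhd G v \<longrightarrow> x \<in> D' \<union> cnbhd G' v"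
      using Cons.prems(3) nG'[OF vG] by auto
  qed
  ultimately show ?case by auto
qed simp

end

context rs begin

lemma F: "lf G' D' B \<Longrightarrow> set B \<subseteq> verts G' \<Longrightarrow> cnbhd G u - {u} \<subseteq> D' \<Longrightarrow> cnbhd G u \<subseteq> DG \<Longrightarrow>
  DG \<inter> (verts G - {u}) \<subseteq> D' \<Longrightarrow> D' \<inter> (verts G - {u}) \<subseteq> DG \<Longrightarrow> DH \<subseteq> D' \<Longrightarrow>
  \<exists>SB TB. lf G DG SB \<and> lf H DH TB \<and> set SB \<subseteq> verts G - {u} \<and> set TB \<subseteq> verts H \<and>
     length B \<le> length SB + length TB \<and> (verts G - {u}) \<inter> (D' \<union> dm G' B) \<subseteq> DG \<union> dm G SB"
proof (induction B arbitrary: D' DG DH)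
  case Nil
  then show ?case by (intro exI[of _ "[]"]) auto
next
  case (Cons v B)
  from Cons.prems(1) obtain x where x: "x \<in> cnbhd G' v" "x \<notin> D'" by auto
  have lfB: "lf G' (D' \<union> cnbhd G' v) B" using Cons.prems(1) by simp
  have sB: "set B \<subseteq> verts G'" using Cons.prems(2) by simp
  have vV: "v \<in> verts G'" using Cons.prems(2) by simp
  have xV: "x \<in> verts G'" using cG'[OF vV] x by auto
  have dmC: "D' \<union> dm G' (v#B) = (D' \<union> cnbhd G' v) \<union> dm G' B" by auto
  show ?case
  proof (cases "v \<in> verts H")
    case vH: True
    have xH: "x \<in> cnbhd H v" using nH[OF vH] x Cons.prems(3) by auto
    have "\<exists>SB TB. lf G DG SB \<and> lf H (DH \<union> cnbhd H v) TB \<and> set SB \<subseteq> verts G - {u} \<and> set TB \<subseteq> verts H \<and>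
     length B \<le> length SB + length TB \<and> (verts G - {u}) \<inter> ((D' \<union> cnbhd G' v) \<union> dm G' B) \<subseteq> DG \<union> dm G SB"
    proof (rule Cons.IH[OF lfB sB])
      show "cnbhd G u - {u} \<subseteq> D' \<union> cnbhd G' v" using Cons.prems(3) by auto
      show "cnbhd G u \<subseteq> DG" by fact
      show "DG \<inter> (verts G - {u}) \<subseteq> D' \<union> cnbhd G' v" using Cons.prems(5) by auto
      show "(D' \<union> cnbhd G' v) \<inter> (verts G - {u}) \<subseteq> DG"
        using Cons.prems(4,6) nH[OF vH] cH[OF vH] disj by auto
      show "DH \<union> cnbhd H v \<subseteq> D' \<union> cnbhd G' v" using Cons.prems(7) nH[OF vH] by auto
    qed
    then obtain SB TB where r: "lf G DG SB" "lf H (DH \<union> cnbhd H v) TB" "set SB \<subseteq> verts G - {u}"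
      "set TB \<subseteq> verts H" "length B \<le> length SB + length TB"
      "(verts G - {u}) \<inter> ((D' \<union> cnbhd G' v) \<union> dm G' B) \<subseteq> DG \<union> dm G SB" by blast
    have "\<not> cnbhd H v \<subseteq> DH" using xH x Cons.prems(7) by auto
    then show ?thesis using r vH dmC by (intro exI[of _ SB] exI[of _ "v#TB"]) auto
  next
    case vnH: False
    then have vG: "v \<in> verts G" "v \<noteq> u" using vV V' by auto
    show ?thesis
    proof (cases "\<exists>y. y \<in> cnbhd G' v \<and> y \<notin> D' \<and> y \<in> verts G - {u}")
      case True
      then obtain y where y: "y \<in> cnbhd G' v" "y \<notin> D'" "y \<in> verts G - {u}" by blast
      have yG: "y \<in> cnbhd G v" "y \<notin> DG" using nG[OF vG] y Cons.prems(5) disj by (auto split: if_splits)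
      have "\<exists>SB TB. lf G (DG \<union> cnbhd G v) SB \<and> lf H DH TB \<and> set SB \<subseteq> verts G - {u} \<and> set TB \<subseteq> verts H \<and>
       length B \<le> length SB + length TB \<and> (verts G - {u}) \<inter> ((D' \<union> cnbhd G' v) \<union> dm G' B) \<subseteq> (DG \<union> cnbhd G v) \<union> dm G SB"
      proof (rule Cons.IH[OF lfB sB])
        show "cnbhd G u - {u} \<subseteq> D' \<union> cnbhd G' v" using Cons.prems(3) by auto
        show "cnbhd G u \<subseteq> DG \<union> cnbhd G v" using Cons.prems(4) by auto
        show "(DG \<union> cnbhd G v) \<inter> (verts G - {u}) \<subseteq> D' \<union> cnbhd G' v"
          using Cons.prems(5) nG[OF vG] by auto
        show "(D' \<union> cnbhd G' v) \<inter> (verts G - {u}) \<subseteq> DG \<union> cnbhd G v"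
          using Cons.prems(6) nG[OF vG] disj by auto
        show "DH \<subseteq> D' \<union> cnbhd G' v" using Cons.prems(7) by auto
      qed
      then obtain SB TB where r: "lf G (DG \<union> cnbhd G v) SB" "lf H DH TB" "set SB \<subseteq> verts G - {u}"
        "set TB \<subseteq> verts H" "length B \<le> length SB + length TB"
        "(verts G - {u}) \<inter> ((D' \<union> cnbhd G' v) \<union> dm G' B) \<subseteq> (DG \<union> cnbhd G v) \<union> dm G SB" by blast
      have "\<not> cnbhd G v \<subseteq> DG" using yG by auto
      then show ?thesis using r vG dmC by (intro exI[of _ "v#SB"] exI[of _ TB]) auto
    next
      case False
      then have xH: "x \<in> verts H" using x xV V' by auto
      have uv: "u \<in> cnbhd G v"
      proof (rule ccontr)
        assume "u \<notin> cnbhd G v"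
        then have "cnbhd G' v \<subseteq> verts G" using nG[OF vG] cG[OF vG(1)] by auto
        then show False using x xH disj by auto
      qed
      have HN: "verts H \<subseteq> cnbhd G' v" using nG[OF vG] uv by auto
      have NG: "cnbhd G' v \<inter> (verts G - {u}) \<subseteq> D'" using False by auto
      have xD: "x \<notin> DH" using x Cons.prems(7) by auto
      have "\<exists>SB TB. lf G DG SB \<and> lf H (DH \<union> cnbhd H x) TB \<and> set SB \<subseteq> verts G - {u} \<and> set TB \<subseteq> verts H \<and>
       length B \<le> length SB + length TB \<and> (verts G - {u}) \<inter> ((D' \<union> cnbhd G' v) \<union> dm G' B) \<subseteq> DG \<union> dm G SB"
      proof (rule Cons.IH[OF lfB sB])
        show "cnbhd G u - {u} \<subseteq> D' \<union> cnbhd G' v" using Cons.prems(3) by auto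
        show "cnbhd G u \<subseteq> DG" by fact
        show "DG \<inter> (verts G - {u}) \<subseteq> D' \<union> cnbhd G' v" using Cons.prems(5) by auto
        show "(D' \<union> cnbhd G' v) \<inter> (verts G - {u}) \<subseteq> DG" using Cons.prems(6) NG by auto
        show "DH \<union> cnbhd H x \<subseteq> D' \<union> cnbhd G' v" using Cons.prems(7) cH[OF xH] HN by auto
      qed
      then obtain SB TB where r: "lf G DG SB" "lf H (DH \<union> cnbhd H x) TB" "set SB \<subseteq> verts G - {u}"
        "set TB \<subseteq> verts H" "length B \<le> length SB + length TB"
        "(verts G - {u}) \<inter> ((D' \<union> cnbhd G' v) \<union> dm G' B) \<subseteq> DG \<union> dm G SB" by blast
      have "\<not> cnbhd H x \<subseteq> DH" using xD cnbhd_self[of x H] by auto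
      then show ?thesis using r xH dmC by (intro exI[of _ SB] exI[of _ "x#TB"]) auto
    qed
  qed
qed

lemma main1: assumes "legal_dom_seq G S" shows "\<exists>S'. legal_dom_seq G' S' \<and> length S \<le> length S'"
proof -
  obtain h where h: "h \<in> verts H" using gH by (auto simp: graph_def)
  let ?f = "\<lambda>x. if x = u then h else x"
  have l: "lf G {} S" "set S \<subseteq> verts G" using assms by (auto simp: legal_iff)
  have "lf G' {} (map ?f S)" using T_Gmap[OF h l] by simp
  moreover have "set (map ?f S) \<subseteq> verts G'" using l(2) h V' by auto
  ultimately obtain S'' where "legal_dom_seq G' (map ?f S @ S'')" using extend[OF graph'] by blast
  then show ?thesis by (intro exI[of _ "map ?f S @ S''"]) simp
qed

lemma main2: assumes "legal_dom_seq G S" "u \<in> I_S G S" "legal_dom_seq H T"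
  shows "\<exists>S'. legal_dom_seq G' S' \<and> length S + length T \<le> length S' + 1"
proof -
  obtain xs ys where S: "S = xs @ u # ys" "u \<notin> dm G xs" using IS_elim[OF assms(1,2)] by blast
  have lS: "lf G {} S" "set S \<subseteq> verts G" "verts G \<subseteq> dm G S" using assms(1) by (auto simp: legal_iff)
  have lT: "lf H {} T" "set T \<subseteq> verts H" "verts H \<subseteq> dm H T" using assms(3) by (auto simp: legal_iff)
  have dS: "distinct S" using lf_distinct lS(1) by blast
  have sxs: "set xs \<subseteq> verts G - {u}" "set ys \<subseteq> verts G - {u}" using dS lS(2) S by auto
  have lxs: "lf G {} xs" "lf G (dm G xs \<union> cnbhd G u) ys" using lS(1) S by (auto simp: lf_append)
  have nu: "\<forall>v\<in>set xs. u \<notin> cnbhd G v" using S(2) by (auto simp: dm_def)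
  have 1: "lf G' {} xs" using T_GA[OF lxs(1) sxs(1)] nu by auto
  have dmxs: "dm G' xs \<inter> verts H = {}"
  proof -
    have "cnbhd G' v \<inter> verts H = {}" if "v \<in> set xs" for v
    proof -
      have vv: "v \<in> verts G" "v \<noteq> u" using that sxs by auto
      show ?thesis using nG[OF vv] cG[OF vv(1)] that nu disj by auto
    qed
    then show ?thesis by (auto simp: dm_def)
  qed
  have 2: "lf G' (dm G' xs) T" using T_H[OF lT(1,2)] dmxs by auto
  have dmxs2: "dm G' xs \<inter> (verts G - {u}) \<subseteq> dm G xs"
  proof -
    have "cnbhd G' v \<inter> (verts G - {u}) \<subseteq> cnbhd G v" if "v \<in> set xs" for v
    proof -
      have vv: "v \<in> verts G" "v \<noteq> u" using that sxs by auto
      show ?thesis using nG[OF vv] cG[OF vv(1)] disj by (auto split: if_splits)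
    qed
    then show ?thesis by (auto simp: dm_def)
  qed
  have dmT: "dm G' T \<inter> (verts G - {u}) \<subseteq> cnbhd G u"
  proof -
    have "cnbhd G' t \<inter> (verts G - {u}) \<subseteq> cnbhd G u" if "t \<in> set T" for t
      using nH[of t] cH[of t] that lT(2) disj by auto
    then show ?thesis by (auto simp: dm_def)
  qed
  have p1: "\<forall>v\<in>set ys. u \<in> cnbhd G v \<longrightarrow> u \<in> dm G xs \<union> cnbhd G u"
    using cnbhd_self[of u G] by auto
  have p2: "(dm G' xs \<union> dm G' T) \<inter> (verts G - {u}) \<subseteq> dm G xs \<union> cnbhd G u"
    using dmxs2 dmT by auto
  have 3: "lf G' (dm G' xs \<union> dm G' T) ys" by (rule T_GA[OF lxs(2) sxs(2) p1 p2])
  have lf': "lf G' {} (xs @ T @ ys)" using 1 2 3 by (simp add: lf_append)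
  have set': "set (xs @ T @ ys) \<subseteq> verts G'" using sxs lT(2) V' by auto
  have Tne: "T \<noteq> []" using lT(3) gH by (auto simp: graph_def)
  then obtain t where t: "t \<in> set T" by (cases T) auto
  have dom': "verts G' \<subseteq> dm G' (xs @ T @ ys)"
  proof
    fix x assume xV: "x \<in> verts G'"
    show "x \<in> dm G' (xs @ T @ ys)"
    proof (cases "x \<in> verts H")
      case True
      then obtain t' where "t' \<in> set T" "x \<in> cnbhd H t'" using lT(3) by (auto simp: dm_def)
      then show ?thesis using nH[of t'] lT(2) by (auto simp: dm_def)
    next
      case False
      then have xG: "x \<in> verts G" "x \<noteq> u" using xV V' by auto
      then obtain v where v: "v \<in> set S" "x \<in> cnbhd G v" using lS(3) by (auto simp: dm_def)
      show ?thesis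
      proof (cases "v = u")
        case True
        then have "x \<in> cnbhd G' t" using nH[of t] t lT(2) v xG by auto
        then show ?thesis using t by (auto simp: dm_def)
      next
        case False
        then have "v \<in> set xs \<or> v \<in> set ys" "x \<in> cnbhd G' v" using v S(1) nG[of v] xG lS(2) by auto
        then show ?thesis by (auto simp: dm_def)
      qed
    qed
  qed
  have "legal_dom_seq G' (xs @ T @ ys)" using lf' set' dom' by (simp add: legal_iff)
  moreover have "length S + length T \<le> length (xs @ T @ ys) + 1" using S by simp
  ultimately show ?thesis by blast
qed

end

context rs begin

lemma main3: assumes "legal_dom_seq G' S'"
  shows "(\<exists>S. legal_dom_seq G S \<and> length S' \<le> length S) \<or>
    (\<exists>S T. legal_dom_seq G S \<and> u \<in> I_S G S \<and> legal_dom_seq H T \<and> length S' + 1 \<le> length S + length T)"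
proof -
  have l: "lf G' {} S'" "set S' \<subseteq> verts G'" "verts G' \<subseteq> dm G' S'" using assms by (auto simp: legal_iff)
  show ?thesis
  proof (cases "\<exists>v\<in>set S'. v \<in> verts H")
    case False
    then have sG: "set S' \<subseteq> verts G - {u}" using l(2) V' by auto
    have "lf G {} S'" using T_back[OF l(1) sG] by simp
    moreover have "verts G \<subseteq> dm G S'"
    proof
      fix x assume xG: "x \<in> verts G"
      show "x \<in> dm G S'"
      proof (cases "x = u")
        case True
        obtain h where h: "h \<in> verts H" using gH by (auto simp: graph_def)
        then obtain v where v: "v \<in> set S'" "h \<in> cnbhd G' v" using l(3) V' by (auto simp: dm_def)
        then have "u \<in> cnbhd G v" using nG'[of v h] sG h V' by auto
        then show ?thesis using v True by (auto simp: dm_def)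
      next
        case False
        then obtain v where v: "v \<in> set S'" "x \<in> cnbhd G' v" using l(3) V' xG by (auto simp: dm_def)
        moreover have "v \<in> verts G" "v \<noteq> u" using v sG by auto
        ultimately have "x \<in> cnbhd G v" using nG'[of v x] xG False V' disj by (auto split: if_splits)
        then show ?thesis using v by (auto simp: dm_def)
      qed
    qed
    ultimately have "legal_dom_seq G S'" using sG by (auto simp: legal_iff)
    then show ?thesis by blast
  next
    case True
    then obtain A t1 R where S': "S' = A @ t1 # R" "t1 \<in> verts H" "\<forall>y\<in>set A. y \<notin> verts H"
      using split_list_first_prop[of S' "\<lambda>v. v \<in> verts H"] by blast
    have sA: "set A \<subseteq> verts G - {u}" using S' l(2) V' by auto
    have sR: "set R \<subseteq> verts G'" using S' l(2) by auto
    have lA: "lf G' {} A" "\<not> cnbhd G' t1 \<subseteq> dm G' A" "lf G' (dm G' A \<union> cnbhd G' t1) R"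
      using l(1) S' by (auto simp: lf_append)
    have lAG: "lf G {} A" using T_back[OF lA(1) sA] by simp
    have dmA1: "dm G' A \<inter> (verts G - {u}) \<subseteq> dm G A"
    proof -
      have "cnbhd G' v \<inter> (verts G - {u}) \<subseteq> cnbhd G v" if "v \<in> set A" for v
      proof -
        have vv: "v \<in> verts G" "v \<noteq> u" using that sA by auto
        show ?thesis using nG[OF vv] cG[OF vv(1)] disj by auto
      qed
      then show ?thesis by (auto simp: dm_def)
    qed
    have dmA2: "dm G A \<inter> (verts G - {u}) \<subseteq> dm G' A"
    proof -
      have "cnbhd G v \<inter> (verts G - {u}) \<subseteq> cnbhd G' v" if "v \<in> set A" for v
      proof -
        have vv: "v \<in> verts G" "v \<noteq> u" using that sA by auto
        show ?thesis using nG[OF vv] cG[OF vv(1)] disj by auto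
      qed
      then show ?thesis by (auto simp: dm_def)
    qed
    have nt1: "cnbhd G' t1 = cnbhd H t1 \<union> (cnbhd G u - {u})" using nH[OF S'(2)] .
    have ct1: "cnbhd H t1 \<subseteq> verts H" using cH[OF S'(2)] .
    have cu: "cnbhd G u \<subseteq> verts G" using cG[OF uG] .
    have domS': "verts G' \<subseteq> dm G' A \<union> cnbhd G' t1 \<union> dm G' R" using l(3) S' by auto
    show ?thesis
    proof (cases "\<exists>a\<in>set A. u \<in> cnbhd G a")
      case True
      then obtain a where a: "a \<in> set A" "u \<in> cnbhd G a" by blast
      have HA: "verts H \<subseteq> dm G' A" using nG[of a] a sA by (auto simp: dm_def)
      have sR2: "set R \<subseteq> verts G - {u}"
      proof
        fix v assume vR: "v \<in> set R"
        show "v \<in> verts G - {u}"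
        proof (rule ccontr)
          assume "v \<notin> verts G - {u}"
          then have vH: "v \<in> verts H" using vR sR V' by auto
          have "cnbhd G' v \<subseteq> dm G' A \<union> cnbhd G' t1" using nH[OF vH] cH[OF vH] HA nt1 by auto
          then show False using lf_fail[OF lA(3) vR] by blast
        qed
      qed
      let ?S = "A @ u # R"
      have w: "\<not> cnbhd G u \<subseteq> dm G A"
      proof -
        obtain x where x: "x \<in> cnbhd G' t1" "x \<notin> dm G' A" using lA(2) by blast
        then have "x \<notin> verts H" using HA by auto
        then have "x \<in> cnbhd G u" "x \<in> verts G - {u}" using x nt1 ct1 cu by auto
        moreover have "x \<notin> dm G A" using dmA2 x calculation by auto
        ultimately show ?thesis by auto
      qed
      have lR: "lf G (dm G A \<union> cnbhd G u) R"
      proof (rule T_back[OF lA(3) sR2])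
        show "\<forall>x\<in>verts G'. (if x \<in> verts H then u else x) \<in> dm G A \<union> cnbhd G u \<longrightarrow> x \<in> dm G' A \<union> cnbhd G' t1"
          using HA dmA2 nt1 V' by auto
      qed
      have "lf G {} ?S" using lAG w lR by (simp add: lf_append)
      moreover have "set ?S \<subseteq> verts G" using sA sR2 uG by auto
      moreover have "verts G \<subseteq> dm G ?S"
      proof
        fix x assume xG: "x \<in> verts G"
        show "x \<in> dm G ?S"
        proof (cases "x = u")
          case True then show ?thesis using cnbhd_self[of u G] by auto
        next
          case False
          then have xV: "x \<in> verts G'" "x \<notin> verts H" using xG V' disj by auto
          then have "x \<in> dm G' A \<or> x \<in> cnbhd G' t1 \<or> x \<in> dm G' R" using domS' by blast
          moreover have "x \<in> dm G' A \<Longrightarrow> x \<in> dm G A" using dmA1 xG False by auto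
          moreover have "x \<in> cnbhd G' t1 \<Longrightarrow> x \<in> cnbhd G u" using nt1 xV ct1 by auto
          moreover have "x \<in> dm G' R \<Longrightarrow> x \<in> dm G R"
          proof -
            assume "x \<in> dm G' R"
            then obtain v where v: "v \<in> set R" "x \<in> cnbhd G' v" by (auto simp: dm_def)
            then have vv: "v \<in> verts G" "v \<noteq> u" using sR2 by auto
            have "x \<in> cnbhd G v" using nG[OF vv] v xV by (auto split: if_splits)
            then show ?thesis using v by (auto simp: dm_def)
          qed
          ultimately show ?thesis by auto
        qed
      qed
      ultimately have "legal_dom_seq G ?S" by (simp add: legal_iff)
      moreover have "length S' \<le> length ?S" using S' by simp
      ultimately show ?thesis by blast
    next
      case False
      have uA: "u \<notin> dm G A" using False by (auto simp: dm_def)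
      have "\<exists>SB TB. lf G (dm G A \<union> cnbhd G u) SB \<and> lf H (cnbhd H t1) TB \<and> set SB \<subseteq> verts G - {u} \<and>
        set TB \<subseteq> verts H \<and> length R \<le> length SB + length TB \<and>
        (verts G - {u}) \<inter> ((dm G' A \<union> cnbhd G' t1) \<union> dm G' R) \<subseteq> (dm G A \<union> cnbhd G u) \<union> dm G SB"
      proof (rule F[OF lA(3) sR])
        show "cnbhd G u - {u} \<subseteq> dm G' A \<union> cnbhd G' t1" using nt1 by auto
        show "cnbhd G u \<subseteq> dm G A \<union> cnbhd G u" by auto
        show "(dm G A \<union> cnbhd G u) \<inter> (verts G - {u}) \<subseteq> dm G' A \<union> cnbhd G' t1" using dmA2 nt1 by auto
        show "(dm G' A \<union> cnbhd G' t1) \<inter> (verts G - {u}) \<subseteq> dm G A \<union> cnbhd G u"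
          using dmA1 nt1 ct1 disj by auto
        show "cnbhd H t1 \<subseteq> dm G' A \<union> cnbhd G' t1" using nt1 by auto
      qed
      then obtain SB TB where r: "lf G (dm G A \<union> cnbhd G u) SB" "lf H (cnbhd H t1) TB"
        "set SB \<subseteq> verts G - {u}" "set TB \<subseteq> verts H" "length R \<le> length SB + length TB"
        "(verts G - {u}) \<inter> ((dm G' A \<union> cnbhd G' t1) \<union> dm G' R) \<subseteq> (dm G A \<union> cnbhd G u) \<union> dm G SB"
        by blast
      let ?S = "A @ u # SB"
      have u1: "\<not> cnbhd G u \<subseteq> dm G A" using uA cnbhd_self[of u G] by auto
      have lS: "lf G {} ?S" using lAG u1 r(1) by (simp add: lf_append)
      have sS: "set ?S \<subseteq> verts G" using sA r(3) uG by auto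
      have dS: "verts G \<subseteq> dm G ?S"
      proof
        fix x assume xG: "x \<in> verts G"
        show "x \<in> dm G ?S"
        proof (cases "x = u")
          case True then show ?thesis using cnbhd_self[of u G] by auto
        next
          case False
          then have "x \<in> verts G'" using xG V' by auto
          then have "x \<in> (verts G - {u}) \<inter> ((dm G' A \<union> cnbhd G' t1) \<union> dm G' R)"
            using domS' xG False by auto
          then show ?thesis using r(6) by auto
        qed
      qed
      have LS: "legal_dom_seq G ?S" using lS sS dS by (simp add: legal_iff)
      have IS: "u \<in> I_S G ?S" using IS_intro[of ?S A u SB G] uA uG by simp
      have lT0: "lf H {} (t1 # TB)" using r(2) cnbhd_self[of t1 H] by auto
      have sT0: "set (t1 # TB) \<subseteq> verts H" using r(4) S'(2) by auto
      obtain T'' where LT: "legal_dom_seq H ((t1 # TB) @ T'')" using extend[OF gH lT0 sT0] by blast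
      have "length S' + 1 \<le> length ?S + length ((t1 # TB) @ T'')" using S' r(5) by simp
      then show ?thesis using LS IS LT by blast
    qed
  qed
qed

end

lemma gmax: assumes "graph G"
  shows "\<exists>S0. legal_dom_seq G S0 \<and> gamma_gr G = ereal (real (length S0)) \<and>
     (\<forall>S. legal_dom_seq G S \<longrightarrow> length S \<le> length S0)"
proof -
  let ?N = "{length S | S. legal_dom_seq G S}"
  have fin: "finite ?N"
  proof (rule finite_subset)
    show "?N \<subseteq> {..card (verts G)}"
    proof
      fix n assume "n \<in> ?N"
      then obtain S where S: "legal_dom_seq G S" "n = length S" by blast
      then have "distinct S" "set S \<subseteq> verts G" by (auto simp: legal_dom_seq_def)
      then have "length S \<le> card (verts G)" using assms
        by (metis card_mono distinct_card graph_def)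
      then show "n \<in> {..card (verts G)}" using S by simp
    qed
  qed simp
  obtain S1 where "legal_dom_seq G ([] @ S1)" using extend[OF assms, of "[]"] by auto
  then have ne: "?N \<noteq> {}" by auto
  have "Max ?N \<in> ?N" using Max_in[OF fin ne] .
  then obtain S0 where S0: "legal_dom_seq G S0" "length S0 = Max ?N" by auto
  have le: "\<forall>S. legal_dom_seq G S \<longrightarrow> length S \<le> length S0"
    using Max_ge[OF fin] S0(2) by auto
  have "gamma_gr G = ereal (real (length S0))" unfolding gamma_gr_def
  proof (rule antisym)
    show "Sup {ereal (real (length S)) |S. legal_dom_seq G S} \<le> ereal (real (length S0))"
      using le by (auto intro!: Sup_least)
    show "ereal (real (length S0)) \<le> Sup {ereal (real (length S)) |S. legal_dom_seq G S}"
      using S0(1) by (auto intro!: Sup_upper)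
  qed
  then show ?thesis using S0(1) le by blast
qed

lemma gu: assumes "graph G" "u \<in> verts G"
  shows "\<exists>S0. legal_dom_seq G S0 \<and> u \<in> I_S G S0 \<and> gamma_gr_u G u = ereal (real (length S0)) \<and>
     (\<forall>S. legal_dom_seq G S \<and> u \<in> I_S G S \<longrightarrow> length S \<le> length S0)"
proof -
  let ?N = "{length S | S. legal_dom_seq G S \<and> u \<in> I_S G S}"
  have fin: "finite ?N"
  proof (rule finite_subset)
    show "?N \<subseteq> {..card (verts G)}"
    proof
      fix n assume "n \<in> ?N"
      then obtain S where S: "legal_dom_seq G S" "n = length S" by blast
      then have "distinct S" "set S \<subseteq> verts G" by (auto simp: legal_dom_seq_def)
      then have "length S \<le> card (verts G)" using assms
        by (metis card_mono distinct_card graph_def)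
      then show "n \<in> {..card (verts G)}" using S by simp
    qed
  qed simp
  have "lf G {} [u]" using cnbhd_self[of u G] by auto
  then obtain S1 where S1: "legal_dom_seq G ([u] @ S1)" using extend[OF assms(1)] assms(2) by fastforce
  have "u \<in> I_S G ([u] @ S1)" using IS_intro[of "[u] @ S1" "[]" u S1 G] assms(2) by simp
  then have ne: "?N \<noteq> {}" using S1 by blast
  have "Max ?N \<in> ?N" using Max_in[OF fin ne] .
  then obtain S0 where S0: "legal_dom_seq G S0" "u \<in> I_S G S0" "length S0 = Max ?N" by auto
  have le: "\<forall>S. legal_dom_seq G S \<and> u \<in> I_S G S \<longrightarrow> length S \<le> length S0"
    using Max_ge[OF fin] S0(3) by auto
  have "gamma_gr_u G u = ereal (real (length S0))" unfolding gamma_gr_u_def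
  proof (rule antisym)
    show "Sup {gamma_gr_I G I |I. independent G I \<and> u \<in> I} \<le> ereal (real (length S0))"
    proof (rule Sup_least)
      fix y assume "y \<in> {gamma_gr_I G I |I. independent G I \<and> u \<in> I}"
      then obtain I where I: "y = gamma_gr_I G I" "u \<in> I" by blast
      show "y \<le> ereal (real (length S0))" unfolding I(1) gamma_gr_I_def
        using le I(2) by (auto intro!: Sup_least)
    qed
    have "ereal (real (length S0)) \<le> gamma_gr_I G (I_S G S0)" unfolding gamma_gr_I_def
      using S0(1) by (auto intro!: Sup_upper)
    also have "\<dots> \<le> Sup {gamma_gr_I G I |I. independent G I \<and> u \<in> I}"
      using IS_indep[OF assms(1) S0(1)] S0(2) by (auto intro!: Sup_upper)
    finally show "ereal (real (length S0)) \<le> Sup {gamma_gr_I G I |I. independent G I \<and> u \<in> I}" .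
  qed
  then show ?thesis using S0 le by blast
qed

theorem lemma3:
  fixes G H :: "'a graph" and u :: 'a
  assumes "graph G" and "graph H"
    and "verts G \<inter> verts H = {}"
    and "u \<in> verts G"
  shows "gamma_gr (replace G u H) = max (gamma_gr G) (gamma_gr_u G u + gamma_gr H - 1)"
proof -
  interpret rs G H u using assms by unfold_locales
  obtain A where A: "legal_dom_seq G' A" "gamma_gr G' = ereal (real (length A))"
    "\<forall>S. legal_dom_seq G' S \<longrightarrow> length S \<le> length A" using gmax[OF graph'] by blast
  obtain B where B: "legal_dom_seq G B" "gamma_gr G = ereal (real (length B))"
    "\<forall>S. legal_dom_seq G S \<longrightarrow> length S \<le> length B" using gmax[OF assms(1)] by blast
  obtain C where C: "legal_dom_seq G C" "u \<in> I_S G C" "gamma_gr_u G u = ereal (real (length C))"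
    "\<forall>S. legal_dom_seq G S \<and> u \<in> I_S G S \<longrightarrow> length S \<le> length C" using gu[OF assms(1,4)] by blast
  obtain D where D: "legal_dom_seq H D" "gamma_gr H = ereal (real (length D))"
    "\<forall>S. legal_dom_seq H S \<longrightarrow> length S \<le> length D" using gmax[OF assms(2)] by blast
  have 1: "length B \<le> length A" using main1[OF B(1)] A(3) by fastforce
  have 2: "length C + length D \<le> length A + 1" using main2[OF C(1,2) D(1)] A(3) by fastforce
  have 3: "length A \<le> length B \<or> length A + 1 \<le> length C + length D"
    using main3[OF A(1)] B(3) C(4) D(3) by fastforce
  have e: "ereal (real (length C)) + ereal (real (length D)) - 1 = ereal (real (length C) + real (length D) - 1)"
    by (simp add: one_ereal_def)
  show ?thesis unfolding A(2) B(2) C(3) D(2) e using 1 2 3 by (auto simp: max_def)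
qed

end
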